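(* In the setting and construction described in the context, for every $i=1,2,\dots,t-2$ we have $|S_{i+1}|\leq |S_i|\,(1+R(4,R(4,s)))$. (More precisely, $|X_i^j|\le R(4,R(4,s))$ for every $j$.)
   Context: All graphs are finite and simple. $P_t$ is the path on $t$ vertices; $K_4$ is the complete graph on $4$ vertices; $SDK_s$ is the one-subdivision of $K_{1,s}$ (replace each edge $uv$ of the star $K_{1,s}$ by a path $u w v$ through a new vertex $w$). A graph is $\mathcal{H}$-free if it has no induced subgraph isomorphic to a member of $\mathcal{H}$. $R(k,l)$ denotes the Ramsey number: the least integer such that every graph on at least $R(k,l)$ vertices contains a clique on $k$ vertices or a stable set on $l$ vertices. For $X\subseteq V$, $N(X)=\bigcup_{v\in X}N(v)$. Setting: $s,t$ are positive integers with $t\ge 2$, and $G=(V,E)$ is a connected $(P_t,SDK_s,K_4)$-free graph. Fix a vertex $a\in V$, let $d(v)$ be the distance from $v$ to $a$, and set $S_1=\{a\}$. For $i=1,2,\dots,t-2$ define $S_{i+1}$ as follows: let $B_i=N(S_i)$ and $W_i=V\setminus(B_i\cup S_i)$; enumerate $S_i=\{v_1,\dots,v_{|S_i|}\}$ and for $j=1,\dots,|S_i|$ let $B_i^j=\{v\in B_i\setminus\bigcup_{k<j}B_i^k : v\text{ is adjacent to }v_j\}$ (so $B_i=\bigcup_j B_i^j$); for each $j$ let $X_i^j\subseteq B_i^j$ be an inclusion-minimal set such that every $w\in W_i$ with $N(w)\cap B_i^j\neq\emptyset$ satisfies $N(w)\cap X_i^j\ne\emptyset$; let $X_i=\bigcup_j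 X_i^j$ and $S_{i+1}=S_i\cup X_i$. The choices of enumeration and of minimal sets are arbitrary. *)

theory Defs
  imports Main
begin

definition simple_graph :: "'a set \<Rightarrow> ('a \<Rightarrow> 'a \<Rightarrow> bool) \<Rightarrow> bool" where
  "simple_graph V E \<longleftrightarrow> finite V \<and> (\<forall>u v. E u v \<longrightarrow> E v u) \<and> (\<forall>v. \<not> E v v)
     \<and> (\<forall>u v. E u v \<longrightarrow> u \<in> V \<and> v \<in> V)"

definition connected_graph :: "'a set \<Rightarrow> ('a \<Rightarrow> 'a \<Rightarrow> bool) \<Rightarrow> bool" where
  "connected_graph V E \<longleftrightarrow> (\<forall>u\<in>V. \<forall>v\<in>V. E\<^sup>*\<^sup>* u v)"

definition has_induced :: "'a set \<Rightarrow> ('a \<Rightarrow> 'a \<Rightarrow> bool) \<Rightarrow> nat set \<Rightarrow> (nat \<Rightarrow> nat \<Rightarrow> bool) \<Rightarrow> bool" where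
  "has_induced V E VH EH \<longleftrightarrow> (\<exists>f. inj_on f VH \<and> f ` VH \<subseteq> V \<and>
      (\<forall>x\<in>VH. \<forall>y\<in>VH. E (f x) (f y) \<longleftrightarrow> EH x y))"

definition path_V :: "nat \<Rightarrow> nat set" where "path_V t = {..<t}"
definition path_E :: "nat \<Rightarrow> nat \<Rightarrow> bool" where "path_E x y \<longleftrightarrow> Suc x = y \<or> Suc y = x"

definition K4_V :: "nat set" where "K4_V = {..<4}"
definition K4_E :: "nat \<Rightarrow> nat \<Rightarrow> bool" where "K4_E x y \<longleftrightarrow> x \<noteq> y"

(* SDK_s: centre 0, leaves 1..s, subdivision vertex k+s on the edge 0 -- k *)
definition SDK_V :: "nat \<Rightarrow> nat set" where "SDK_V s = {..2*s}"
definition SDK_E :: "nat \<Rightarrow> nat \<Rightarrow> nat \<Rightarrow> bool" where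
  "SDK_E s x y \<longleftrightarrow>
     (x = 0 \<and> y \<in> {s+1..2*s}) \<or> (y = 0 \<and> x \<in> {s+1..2*s}) \<or>
     (x \<in> {1..s} \<and> y = x + s) \<or> (y \<in> {1..s} \<and> x = y + s)"

definition ramsey :: "nat \<Rightarrow> nat \<Rightarrow> nat" where
  "ramsey k l = (LEAST n. \<forall>m\<ge>n. \<forall>E :: nat \<Rightarrow> nat \<Rightarrow> bool.
      (\<forall>x y. E x y \<longrightarrow> E y x) \<longrightarrow>
      (\<exists>K\<subseteq>{..<m}. card K = k \<and> (\<forall>x\<in>K. \<forall>y\<in>K. x \<noteq> y \<longrightarrow> E x y)) \<or>
      (\<exists>I\<subseteq>{..<m}. card I = l \<and> (\<forall>x\<in>I. \<forall>y\<in>I. x \<noteq> y \<longrightarrow> \<not> E x y)))"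

definition nbhd :: "'a set \<Rightarrow> ('a \<Rightarrow> 'a \<Rightarrow> bool) \<Rightarrow> 'a set \<Rightarrow> 'a set" where
  "nbhd V E X = {v \<in> V. \<exists>u\<in>X. E u v}"

(* B_i^j for enumeration vs of S_i (0-indexed j) *)
definition Bpart :: "'a set \<Rightarrow> ('a \<Rightarrow> 'a \<Rightarrow> bool) \<Rightarrow> 'a list \<Rightarrow> nat \<Rightarrow> 'a set" where
  "Bpart V E vs j = {v \<in> nbhd V E (set vs). E (vs ! j) v \<and> (\<forall>k<j. \<not> E (vs ! k) v)}"

definition Wset :: "'a set \<Rightarrow> ('a \<Rightarrow> 'a \<Rightarrow> bool) \<Rightarrow> 'a set \<Rightarrow> 'a set" where
  "Wset V E S = V - (nbhd V E S \<union> S)"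

definition dominates :: "'a set \<Rightarrow> ('a \<Rightarrow> 'a \<Rightarrow> bool) \<Rightarrow> 'a set \<Rightarrow> 'a set \<Rightarrow> 'a set \<Rightarrow> bool" where
  "dominates V E W B X \<longleftrightarrow> (\<forall>w\<in>W. nbhd V E {w} \<inter> B \<noteq> {} \<longrightarrow> nbhd V E {w} \<inter> X \<noteq> {})"

definition minimal_dom :: "'a set \<Rightarrow> ('a \<Rightarrow> 'a \<Rightarrow> bool) \<Rightarrow> 'a set \<Rightarrow> 'a set \<Rightarrow> 'a set \<Rightarrow> bool" where
  "minimal_dom V E W B X \<longleftrightarrow> X \<subseteq> B \<and> dominates V E W B X \<and>
     (\<forall>Y. Y \<subset> X \<longrightarrow> \<not> dominates V E W B Y)"

end

theory Submission imports Defs "HOL-Library.Ramsey" begin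

lemma ramsey_nat:
  "\<forall>m\<ge>ramsey k l. \<forall>E :: nat \<Rightarrow> nat \<Rightarrow> bool.
      (\<forall>x y. E x y \<longrightarrow> E y x) \<longrightarrow>
      (\<exists>K\<subseteq>{..<m}. card K = k \<and> (\<forall>x\<in>K. \<forall>y\<in>K. x \<noteq> y \<longrightarrow> E x y)) \<or>
      (\<exists>I\<subseteq>{..<m}. card I = l \<and> (\<forall>x\<in>I. \<forall>y\<in>I. x \<noteq> y \<longrightarrow> \<not> E x y))"
  unfolding ramsey_def
proof (rule LeastI_ex)
  obtain N :: nat where N: "partn_lst {..<N} [k,l] 2" using ramsey_full by blast
  show "\<exists>n. \<forall>m\<ge>n. \<forall>E :: nat \<Rightarrow> nat \<Rightarrow> bool.
      (\<forall>x y. E x y \<longrightarrow> E y x) \<longrightarrow>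
      (\<exists>K\<subseteq>{..<m}. card K = k \<and> (\<forall>x\<in>K. \<forall>y\<in>K. x \<noteq> y \<longrightarrow> E x y)) \<or>
      (\<exists>I\<subseteq>{..<m}. card I = l \<and> (\<forall>x\<in>I. \<forall>y\<in>I. x \<noteq> y \<longrightarrow> \<not> E x y))"
  proof (intro exI allI impI)
    fix m :: nat and E :: "nat \<Rightarrow> nat \<Rightarrow> bool"
    assume "N \<le> m" and sym: "\<forall>x y. E x y \<longrightarrow> E y x"
    have M: "partn_lst {..<m} [k,l] 2" using partn_lst_greater_resource[OF N \<open>N \<le> m\<close>] .
    define f where "f S = (if \<forall>x\<in>S. \<forall>y\<in>S. x \<noteq> y \<longrightarrow> E x y then 0 else (1::nat))" for S
    have "f \<in> nsets {..<m} 2 \<rightarrow> {..<2}" by (auto simp: f_def)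
    then obtain i H where i: "i < 2" and H: "H \<in> nsets {..<m} ([k,l]!i)" and sub: "f ` (nsets H 2) \<subseteq> {i}"
      using partn_lstE[OF M] by (metis length_Cons list.size(3) numeral_2_eq_2)
    have fin: "finite H" "H \<subseteq> {..<m}" "card H = [k,l]!i" using H by (auto simp: nsets_def)
    have pair: "f {x,y} = i" if "x \<in> H" "y \<in> H" "x \<noteq> y" for x y
    proof -
      have "{x,y} \<in> nsets H 2" using that by simp
      then show ?thesis using sub by blast
    qed
    show "(\<exists>K\<subseteq>{..<m}. card K = k \<and> (\<forall>x\<in>K. \<forall>y\<in>K. x \<noteq> y \<longrightarrow> E x y)) \<or>
      (\<exists>I\<subseteq>{..<m}. card I = l \<and> (\<forall>x\<in>I. \<forall>y\<in>I. x \<noteq> y \<longrightarrow> \<not> E x y))"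
    proof (cases "i = 0")
      case True
      have "\<forall>x\<in>H. \<forall>y\<in>H. x \<noteq> y \<longrightarrow> E x y"
      proof (intro ballI impI)
        fix x y assume "x \<in> H" "y \<in> H" "x \<noteq> y"
        then have "f {x,y} = 0" using pair True by simp
        then show "E x y" using \<open>x \<noteq> y\<close> by (auto simp: f_def split: if_splits)
      qed
      moreover have "card H = k" using fin(3) True by simp
      ultimately show ?thesis using fin(2) by blast
    next
      case False
      then have i1: "i = 1" using i by simp
      have "\<forall>x\<in>H. \<forall>y\<in>H. x \<noteq> y \<longrightarrow> \<not> E x y"
      proof (intro ballI impI)
        fix x y assume "x \<in> H" "y \<in> H" "x \<noteq> y"
        then have "f {x,y} = 1" using pair i1 by simp
        then show "\<not> E x y" using \<open>x \<noteq> y\<close> sym by (auto simp: f_def split: if_splits)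
      qed
      moreover have "card H = l" using fin(3) i1 by simp
      ultimately show ?thesis using fin(2) by blast
    qed
  qed
qed

lemma ramsey_set:
  fixes A :: "'a set" and E :: "'a \<Rightarrow> 'a \<Rightarrow> bool"
  assumes "finite A" "\<forall>x y. E x y \<longrightarrow> E y x" "card A \<ge> ramsey k l"
  shows "(\<exists>K\<subseteq>A. card K = k \<and> (\<forall>x\<in>K. \<forall>y\<in>K. x \<noteq> y \<longrightarrow> E x y)) \<or>
         (\<exists>I\<subseteq>A. card I = l \<and> (\<forall>x\<in>I. \<forall>y\<in>I. x \<noteq> y \<longrightarrow> \<not> E x y))"
proof -
  obtain g where g: "bij_betw g {0..<card A} A" using ex_bij_betw_nat_finite[OF assms(1)] by blast
  have inj: "inj_on g {..<card A}" and im: "g ` {..<card A} = A" using g by (auto simp: bij_betw_def atLeast0LessThan)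
  define E' where "E' x y = E (g x) (g y)" for x y
  have symE': "\<forall>x y. E' x y \<longrightarrow> E' y x" using assms(2) by (simp add: E'_def)
  have R: "(\<exists>K\<subseteq>{..<card A}. card K = k \<and> (\<forall>x\<in>K. \<forall>y\<in>K. x \<noteq> y \<longrightarrow> E' x y)) \<or>
      (\<exists>I\<subseteq>{..<card A}. card I = l \<and> (\<forall>x\<in>I. \<forall>y\<in>I. x \<noteq> y \<longrightarrow> \<not> E' x y))"
    using mp[OF spec[OF mp[OF spec[OF ramsey_nat[of k l], of "card A"] assms(3)], of E'] symE'] .
  show ?thesis
  proof (rule disjE[OF R])
    assume "\<exists>K\<subseteq>{..<card A}. card K = k \<and> (\<forall>x\<in>K. \<forall>y\<in>K. x \<noteq> y \<longrightarrow> E' x y)"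
    then obtain K where K: "K \<subseteq> {..<card A}" "card K = k" "\<forall>x\<in>K. \<forall>y\<in>K. x \<noteq> y \<longrightarrow> E' x y" by blast
    have ik: "inj_on g K" using inj K(1) inj_on_subset by blast
    have "g ` K \<subseteq> A" using K(1) im by blast
    have "card (g ` K) = k" using K(2) ik by (simp add: card_image)
    moreover have "\<forall>x\<in>g`K. \<forall>y\<in>g`K. x \<noteq> y \<longrightarrow> E x y" using K(3) by (auto simp: E'_def)
    ultimately show ?thesis using \<open>g ` K \<subseteq> A\<close> by blast
  next
    assume "\<exists>K\<subseteq>{..<card A}. card K = l \<and> (\<forall>x\<in>K. \<forall>y\<in>K. x \<noteq> y \<longrightarrow> \<not> E' x y)"
    then obtain K where K: "K \<subseteq> {..<card A}" "card K = l" "\<forall>x\<in>K. \<forall>y\<in>K. x \<noteq> y \<longrightarrow> \<not> E' x y" by blast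
    have ik: "inj_on g K" using inj K(1) inj_on_subset by blast
    have "g ` K \<subseteq> A" using K(1) im by blast
    have "card (g ` K) = l" using K(2) ik by (simp add: card_image)
    moreover have "\<forall>x\<in>g`K. \<forall>y\<in>g`K. x \<noteq> y \<longrightarrow> \<not> E x y" using K(3) by (auto simp: E'_def)
    ultimately show ?thesis using \<open>g ` K \<subseteq> A\<close> by blast
  qed
qed

lemma K4_lemma:
  assumes sg: "simple_graph V E" and K: "K \<subseteq> V" "card K = 4" "\<forall>x\<in>K. \<forall>y\<in>K. x \<noteq> y \<longrightarrow> E x y"
  shows "has_induced V E K4_V K4_E"
proof -
  have "finite K" using K(2) by (metis card.infinite zero_neq_numeral)
  then obtain h where h: "bij_betw h {0..<4::nat} K" using ex_bij_betw_nat_finite[of K] K(2) by metis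
  have "inj_on h K4_V" "h ` K4_V \<subseteq> V" using h K(1) by (auto simp: bij_betw_def K4_V_def atLeast0LessThan)
  moreover have "\<forall>x\<in>K4_V. \<forall>y\<in>K4_V. E (h x) (h y) \<longleftrightarrow> K4_E x y"
  proof (intro ballI)
    fix x y assume xy: "x \<in> K4_V" "y \<in> K4_V"
    show "E (h x) (h y) \<longleftrightarrow> K4_E x y"
    proof (cases "x = y")
      case True then show ?thesis using sg by (simp add: simple_graph_def K4_E_def)
    next
      case False
      then have "h x \<noteq> h y" "h x \<in> K" "h y \<in> K" using h xy
        by (auto simp: bij_betw_def K4_V_def atLeast0LessThan inj_on_def)
      then show ?thesis using K(3) False by (simp add: K4_E_def)
    qed
  qed
  ultimately show ?thesis unfolding has_induced_def by blast
qed

lemma SDK_lemma: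
  fixes V :: "'a set" and p :: "'a \<Rightarrow> 'a"
  assumes sg: "simple_graph V E" and s1: "s \<ge> 1" and IV: "I \<subseteq> V" and fI: "finite I" and cI: "card I = s"
    and vV: "v \<in> V" and pV: "p ` I \<subseteq> V"
    and a: "\<forall>x\<in>I. E v x" and b: "\<forall>x\<in>I. \<not> E v (p x)" and c: "\<forall>x\<in>I. E (p x) x"
    and d: "\<forall>x\<in>I. \<forall>y\<in>I. x \<noteq> y \<longrightarrow> \<not> E x y"
    and e: "\<forall>x\<in>I. \<forall>y\<in>I. x \<noteq> y \<longrightarrow> \<not> E (p x) (p y)"
    and f: "\<forall>x\<in>I. \<forall>y\<in>I. x \<noteq> y \<longrightarrow> \<not> E (p x) y"
    and g: "\<forall>x\<in>I. p x \<noteq> v"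
  shows "has_induced V E (SDK_V s) (SDK_E s)"
proof -
  have sym: "\<And>x y. E x y \<Longrightarrow> E y x" and irr: "\<And>x. \<not> E x x" using sg by (auto simp: simple_graph_def)
  obtain h where h: "bij_betw h {1..s} I" using ex_bij_betw_nat_finite_1[OF fI] unfolding cI by blast
  have hI: "\<And>n. n \<in> {1..s} \<Longrightarrow> h n \<in> I" using h by (auto simp: bij_betw_def)
  have hinj: "\<And>m n. m \<in> {1..s} \<Longrightarrow> n \<in> {1..s} \<Longrightarrow> h m = h n \<Longrightarrow> m = n"
    using h unfolding bij_betw_def inj_on_def by blast
  have vx: "\<And>x. x \<in> I \<Longrightarrow> v \<noteq> x" using a irr by blast
  have px: "\<And>x y. x \<in> I \<Longrightarrow> y \<in> I \<Longrightarrow> p x \<noteq> y"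
  proof
    fix x y assume xy: "x \<in> I" "y \<in> I" "p x = y"
    show False
    proof (cases "x = y")
      case True
      have "E (p x) x" using c xy(1) by blast
      then show False using xy(3) True irr by simp
    next
      case False
      have "E (p x) x" using c xy(1) by blast
      then have "E y x" using xy(3) by simp
      then have "E x y" by (rule sym)
      then show False using d xy False by blast
    qed
  qed
  have pinj: "\<And>x y. x \<in> I \<Longrightarrow> y \<in> I \<Longrightarrow> p x = p y \<Longrightarrow> x = y"
  proof (rule ccontr)
    fix x y assume xy: "x \<in> I" "y \<in> I" "p x = p y" "x \<noteq> y"
    have "y \<noteq> x" using xy(4) by simp
    then have "\<not> E (p y) x" using f xy(1,2) by blast
    moreover have "E (p x) x" using c xy(1) by blast
    ultimately show False using xy(3) by simp
  qed
  define F where "F n = (if n = 0 then v else if n \<le> s then p (h n) else h (n - s))" for n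
  have F0: "F 0 = v" by (simp add: F_def)
  have F1: "\<And>n. n \<in> {1..s} \<Longrightarrow> F n = p (h n)" by (simp add: F_def)
  have F2: "\<And>n. n \<in> {s+1..2*s} \<Longrightarrow> F n = h (n - s)" by (simp add: F_def)
  have sub: "\<And>n. n \<in> {s+1..2*s} \<Longrightarrow> n - s \<in> {1..s}" by auto
  have split: "\<And>n. n \<in> SDK_V s \<Longrightarrow> n = 0 \<or> n \<in> {1..s} \<or> n \<in> {s+1..2*s}"
    by (auto simp: SDK_V_def)
  have cls: "\<And>P. (\<And>n. n \<in> SDK_V s \<Longrightarrow> P n) \<Longrightarrow> True" by simp
  have inj: "inj_on F (SDK_V s)"
  proof (rule inj_onI)
    fix m n assume m: "m \<in> SDK_V s" and n: "n \<in> SDK_V s" and eq: "F m = F n"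
    from split[OF m] split[OF n] show "m = n"
    proof (elim disjE)
      assume "m = 0" "n = 0" then show ?thesis by simp
    next
      assume A: "m = 0" "n \<in> {1..s}"
      then have "p (h n) = v" using eq F0 F1 by simp
      then show ?thesis using g hI[OF A(2)] by blast
    next
      assume A: "m = 0" "n \<in> {s+1..2*s}"
      then have "v = h (n - s)" using eq F0 F2 by simp
      then show ?thesis using vx hI[OF sub[OF A(2)]] by blast
    next
      assume A: "n = 0" "m \<in> {1..s}"
      then have "p (h m) = v" using eq F0 F1 by simp
      then show ?thesis using g hI[OF A(2)] by blast
    next
      assume A: "m \<in> {1..s}" "n \<in> {1..s}"
      then have "p (h m) = p (h n)" using eq F1 by simp
      then have "h m = h n" using pinj hI A by blast
      then show ?thesis using hinj A by blast
    next
      assume A: "m \<in> {1..s}" "n \<in> {s+1..2*s}"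
      then have "p (h m) = h (n - s)" using eq F1 F2 by simp
      then show ?thesis using px hI[OF A(1)] hI[OF sub[OF A(2)]] by blast
    next
      assume A: "n = 0" "m \<in> {s+1..2*s}"
      then have "v = h (m - s)" using eq F0 F2 by simp
      then show ?thesis using vx hI[OF sub[OF A(2)]] by blast
    next
      assume A: "n \<in> {1..s}" "m \<in> {s+1..2*s}"
      then have "p (h n) = h (m - s)" using eq F1 F2 by simp
      then show ?thesis using px hI[OF A(1)] hI[OF sub[OF A(2)]] by blast
    next
      assume "m \<in> {s+1..2*s}" "n \<in> {s+1..2*s}"
      then have "h (m - s) = h (n - s)" using eq F2 by simp
      then have "m - s = n - s" using hinj sub \<open>m \<in> {s+1..2*s}\<close> \<open>n \<in> {s+1..2*s}\<close> by blast
      then show ?thesis using \<open>m \<in> {s+1..2*s}\<close> \<open>n \<in> {s+1..2*s}\<close> by auto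
    qed
  qed
  have FV: "F ` SDK_V s \<subseteq> V"
  proof
    fix y assume "y \<in> F ` SDK_V s"
    then obtain n where n: "n \<in> SDK_V s" "y = F n" by blast
    from split[OF n(1)] show "y \<in> V"
    proof (elim disjE)
      assume "n = 0" then show ?thesis using n(2) F0 vV by simp
    next
      assume A: "n \<in> {1..s}" then show ?thesis using n(2) F1[OF A] hI[OF A] pV by auto
    next
      assume A: "n \<in> {s+1..2*s}" then show ?thesis using n(2) F2[OF A] hI[OF sub[OF A]] IV by auto
    qed
  qed
  have edge: "E (F m) (F n) \<longleftrightarrow> SDK_E s m n" if m: "m \<in> SDK_V s" and n: "n \<in> SDK_V s" for m n
  proof -
    from split[OF m] split[OF n] show ?thesis
    proof (elim disjE)
      assume "m = 0" "n = 0" then show ?thesis using irr by (simp add: SDK_E_def)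
    next
      assume A: "m = 0" "n \<in> {1..s}"
      then have "\<not> E (F m) (F n)" using F0 F1[OF A(2)] b hI[OF A(2)] by simp
      moreover have "\<not> SDK_E s m n" using A by (auto simp: SDK_E_def)
      ultimately show ?thesis by simp
    next
      assume A: "m = 0" "n \<in> {s+1..2*s}"
      then have "E (F m) (F n)" using F0 F2[OF A(2)] a hI[OF sub[OF A(2)]] by simp
      moreover have "SDK_E s m n" using A by (auto simp: SDK_E_def)
      ultimately show ?thesis by simp
    next
      assume A: "n = 0" "m \<in> {1..s}"
      then have "\<not> E (F n) (F m)" using F0 F1[OF A(2)] b hI[OF A(2)] by simp
      then have "\<not> E (F m) (F n)" using sym by blast
      moreover have "\<not> SDK_E s m n" using A by (auto simp: SDK_E_def)
      ultimately show ?thesis by simp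
    next
      assume A: "m \<in> {1..s}" "n \<in> {1..s}"
      have "\<not> E (F m) (F n)"
      proof (cases "m = n")
        case True then show ?thesis using irr by simp
      next
        case False then have "h m \<noteq> h n" using hinj A by blast
        then show ?thesis using e F1[OF A(1)] F1[OF A(2)] hI[OF A(1)] hI[OF A(2)] by simp
      qed
      moreover have "\<not> SDK_E s m n" using A by (auto simp: SDK_E_def)
      ultimately show ?thesis by simp
    next
      assume A: "m \<in> {1..s}" "n \<in> {s+1..2*s}"
      show ?thesis
      proof (cases "n = m + s")
        case True
        then have "n - s = m" by simp
        then have "E (F m) (F n)" using F1[OF A(1)] F2[OF A(2)] c hI[OF A(1)] by simp
        moreover have "SDK_E s m n" using A True by (auto simp: SDK_E_def)
        ultimately show ?thesis by simp
      next
        case False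
        then have "m \<noteq> n - s" using A by auto
        then have "h m \<noteq> h (n - s)" using hinj A sub by blast
        then have "\<not> E (F m) (F n)" using F1[OF A(1)] F2[OF A(2)] f hI[OF A(1)] hI[OF sub[OF A(2)]] by simp
        moreover have "\<not> SDK_E s m n" using A False by (auto simp: SDK_E_def)
        ultimately show ?thesis by simp
      qed
    next
      assume A: "n = 0" "m \<in> {s+1..2*s}"
      then have "E (F n) (F m)" using F0 F2[OF A(2)] a hI[OF sub[OF A(2)]] by simp
      then have "E (F m) (F n)" using sym by blast
      moreover have "SDK_E s m n" using A by (auto simp: SDK_E_def)
      ultimately show ?thesis by simp
    next
      assume A: "n \<in> {1..s}" "m \<in> {s+1..2*s}"
      show ?thesis
      proof (cases "m = n + s")
        case True
        then have "m - s = n" by simp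
        then have "E (F n) (F m)" using F1[OF A(1)] F2[OF A(2)] c hI[OF A(1)] by simp
        then have "E (F m) (F n)" using sym by blast
        moreover have "SDK_E s m n" using A True by (auto simp: SDK_E_def)
        ultimately show ?thesis by simp
      next
        case False
        then have "n \<noteq> m - s" using A by auto
        then have "h n \<noteq> h (m - s)" using hinj A sub by blast
        then have "\<not> E (F n) (F m)" using F1[OF A(1)] F2[OF A(2)] f hI[OF A(1)] hI[OF sub[OF A(2)]] by simp
        then have "\<not> E (F m) (F n)" using sym by blast
        moreover have "\<not> SDK_E s m n" using A False by (auto simp: SDK_E_def)
        ultimately show ?thesis by simp
      qed
    next
      assume A: "m \<in> {s+1..2*s}" "n \<in> {s+1..2*s}"
      have "\<not> E (F m) (F n)"
      proof (cases "m = n")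
        case True then show ?thesis using irr by simp
      next
        case False then have "m - s \<noteq> n - s" using A by auto
        then have "h (m - s) \<noteq> h (n - s)" using hinj A sub by blast
        then show ?thesis using d F2[OF A(1)] F2[OF A(2)] hI[OF sub[OF A(1)]] hI[OF sub[OF A(2)]] by simp
      qed
      moreover have "\<not> SDK_E s m n" using A by (auto simp: SDK_E_def)
      ultimately show ?thesis by simp
    qed
  qed
  show ?thesis unfolding has_induced_def using inj FV edge by blast
qed


lemma Xbound:
  fixes V :: "'a set" and vs :: "'a list"
  assumes sg: "simple_graph V E" and s1: "s \<ge> 1"
    and noSDK: "\<not> has_induced V E (SDK_V s) (SDK_E s)"
    and noK4: "\<not> has_induced V E K4_V K4_E"
    and j: "j < length vs"
    and md: "minimal_dom V E (Wset V E (set vs)) (Bpart V E vs j) Xj"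
  shows "card Xj \<le> ramsey 4 (ramsey 4 s)"
proof (rule ccontr)
  assume big: "\<not> card Xj \<le> ramsey 4 (ramsey 4 s)"
  define B where "B = Bpart V E vs j"
  define W where "W = Wset V E (set vs)"
  define v where "v = vs ! j"
  have sym: "\<And>x y. E x y \<Longrightarrow> E y x" and inV: "\<And>x y. E x y \<Longrightarrow> x \<in> V \<and> y \<in> V"
    and finV: "finite V" using sg by (auto simp: simple_graph_def)
  have symA: "\<forall>x y. E x y \<longrightarrow> E y x" using sym by blast
  have XB: "Xj \<subseteq> B" and dom: "dominates V E W B Xj" and minl: "\<forall>Y. Y \<subset> Xj \<longrightarrow> \<not> dominates V E W B Y"
    using md by (auto simp: minimal_dom_def B_def W_def)
  have XV: "Xj \<subseteq> V" using XB by (auto simp: B_def Bpart_def nbhd_def)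
  have finX: "finite Xj" using XV finV finite_subset by blast
  have vX: "\<forall>x\<in>Xj. E v x" using XB by (auto simp: B_def Bpart_def v_def)
  have vS: "v \<in> set vs" using j by (simp add: v_def)
  have Wp: "\<And>w. w \<in> W \<Longrightarrow> w \<in> V \<and> w \<notin> set vs \<and> (\<forall>u\<in>set vs. \<not> E u w)"
    by (auto simp: W_def Wset_def nbhd_def)
  have nb: "\<And>w. nbhd V E {w} = {u\<in>V. E w u}" by (auto simp: nbhd_def)
  have priv: "\<forall>x\<in>Xj. \<exists>w. w \<in> W \<and> E w x \<and> (\<forall>y\<in>Xj. E w y \<longrightarrow> y = x)"
  proof
    fix x assume x: "x \<in> Xj"
    have "Xj - {x} \<subset> Xj" using x by blast
    then have "\<not> dominates V E W B (Xj - {x})" using minl by blast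
    then obtain w where w: "w \<in> W" "nbhd V E {w} \<inter> B \<noteq> {}" "nbhd V E {w} \<inter> (Xj - {x}) = {}"
      unfolding dominates_def by blast
    then have "nbhd V E {w} \<inter> Xj \<noteq> {}" using dom unfolding dominates_def by blast
    then obtain y where y: "y \<in> Xj" "E w y" using nb by blast
    have uniq: "\<forall>z\<in>Xj. E w z \<longrightarrow> z = x"
    proof (intro ballI impI)
      fix z assume "z \<in> Xj" "E w z"
      then have "z \<in> nbhd V E {w}" using nb XV by blast
      then show "z = x" using w(3) \<open>z \<in> Xj\<close> by blast
    qed
    then have "y = x" using y by blast
    then show "\<exists>w. w \<in> W \<and> E w x \<and> (\<forall>y\<in>Xj. E w y \<longrightarrow> y = x)" using w(1) y(2) uniq by blast
  qed
  obtain pw where pw: "\<forall>x\<in>Xj. pw x \<in> W \<and> E (pw x) x \<and> (\<forall>y\<in>Xj. E (pw x) y \<longrightarrow> y = x)"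
    using bchoice[OF priv] by blast
  have pwinj: "inj_on pw Xj"
  proof (rule inj_onI)
    fix x y assume "x \<in> Xj" "y \<in> Xj" "pw x = pw y"
    then have "E (pw x) y" using pw by metis
    then show "x = y" using pw \<open>x \<in> Xj\<close> \<open>y \<in> Xj\<close> by metis
  qed
  have "card Xj \<ge> ramsey 4 (ramsey 4 s)" using big by simp
  from ramsey_set[OF finX symA this] obtain I where I: "I \<subseteq> Xj" "card I = ramsey 4 s"
      "\<forall>x\<in>I. \<forall>y\<in>I. x \<noteq> y \<longrightarrow> \<not> E x y"
  proof
    assume "\<exists>K\<subseteq>Xj. card K = 4 \<and> (\<forall>x\<in>K. \<forall>y\<in>K. x \<noteq> y \<longrightarrow> E x y)"
    then obtain K where "K \<subseteq> Xj" "card K = 4" "\<forall>x\<in>K. \<forall>y\<in>K. x \<noteq> y \<longrightarrow> E x y" by blast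
    then have "has_induced V E K4_V K4_E" using K4_lemma[OF sg] XV by blast
    then show ?thesis using noK4 by blast
  qed blast
  define T where "T = pw ` I"
  have injI: "inj_on pw I" using pwinj I(1) inj_on_subset by blast
  have finI: "finite I" using finX I(1) finite_subset by blast
  have TV: "T \<subseteq> V" using pw I(1) Wp unfolding T_def by blast
  have finT: "finite T" using finI T_def by simp
  have cT: "card T = ramsey 4 s" using card_image[OF injI] I(2) T_def by simp
  from ramsey_set[OF finT symA] cT obtain Z where Z: "Z \<subseteq> T" "card Z = s"
      "\<forall>x\<in>Z. \<forall>y\<in>Z. x \<noteq> y \<longrightarrow> \<not> E x y"
  proof -
    assume H: "\<And>Z. Z \<subseteq> T \<Longrightarrow> card Z = s \<Longrightarrow> \<forall>x\<in>Z. \<forall>y\<in>Z. x \<noteq> y \<longrightarrow> \<not> E x y \<Longrightarrow> thesis"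
    have "(\<exists>K\<subseteq>T. card K = 4 \<and> (\<forall>x\<in>K. \<forall>y\<in>K. x \<noteq> y \<longrightarrow> E x y)) \<or>
         (\<exists>I\<subseteq>T. card I = s \<and> (\<forall>x\<in>I. \<forall>y\<in>I. x \<noteq> y \<longrightarrow> \<not> E x y))"
      using ramsey_set[OF finT symA] cT by simp
    then show thesis
    proof
      assume "\<exists>K\<subseteq>T. card K = 4 \<and> (\<forall>x\<in>K. \<forall>y\<in>K. x \<noteq> y \<longrightarrow> E x y)"
      then obtain K where "K \<subseteq> T" "card K = 4" "\<forall>x\<in>K. \<forall>y\<in>K. x \<noteq> y \<longrightarrow> E x y" by blast
      then have "has_induced V E K4_V K4_E" using K4_lemma[OF sg] TV by blast
      then show ?thesis using noK4 by blast
    next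
      assume "\<exists>I\<subseteq>T. card I = s \<and> (\<forall>x\<in>I. \<forall>y\<in>I. x \<noteq> y \<longrightarrow> \<not> E x y)"
      then show ?thesis using H by blast
    qed
  qed
  define I' where "I' = {x\<in>I. pw x \<in> Z}"
  have I'I: "I' \<subseteq> I" by (auto simp: I'_def)
  have imI': "pw ` I' = Z" using Z(1) unfolding I'_def T_def by blast
  have injI': "inj_on pw I'" using injI I'I inj_on_subset by blast
  have cI': "card I' = s" using card_image[OF injI'] imI' Z(2) by simp
  have I'X: "I' \<subseteq> Xj" using I'I I(1) by blast
  have finI': "finite I'" using finI I'I finite_subset by blast
  have vV: "v \<in> V"
  proof -
    have "I' \<noteq> {}" using cI' s1 by auto
    then obtain x where "x \<in> I'" by blast
    then have "E v x" using vX I'X by blast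
    then show ?thesis using inV by blast
  qed
  have "has_induced V E (SDK_V s) (SDK_E s)"
  proof (rule SDK_lemma[OF sg s1 _ finI' cI' vV])
    show "I' \<subseteq> V" using I'X XV by blast
    show "pw ` I' \<subseteq> V" using I'X pw Wp by blast
    show "\<forall>x\<in>I'. E v x" using I'X vX by blast
    show "\<forall>x\<in>I'. \<not> E v (pw x)" using I'X pw Wp vS by blast
    show "\<forall>x\<in>I'. E (pw x) x" using I'X pw by blast
    show "\<forall>x\<in>I'. \<forall>y\<in>I'. x \<noteq> y \<longrightarrow> \<not> E x y" using I'I I(3) by blast
    show "\<forall>x\<in>I'. \<forall>y\<in>I'. x \<noteq> y \<longrightarrow> \<not> E (pw x) (pw y)"
    proof (intro ballI impI)
      fix x y assume xy: "x \<in> I'" "y \<in> I'" "x \<noteq> y"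
      then have "pw x \<noteq> pw y" using injI' unfolding inj_on_def by blast
      moreover have "pw x \<in> Z" "pw y \<in> Z" using xy imI' by blast+
      ultimately show "\<not> E (pw x) (pw y)" using Z(3) by blast
    qed
    show "\<forall>x\<in>I'. \<forall>y\<in>I'. x \<noteq> y \<longrightarrow> \<not> E (pw x) y"
    proof (intro ballI impI)
      fix x y assume xy: "x \<in> I'" "y \<in> I'" "x \<noteq> y"
      then have "x \<in> Xj" "y \<in> Xj" using I'X by blast+
      then show "\<not> E (pw x) y" using pw xy(3) by metis
    qed
    show "\<forall>x\<in>I'. pw x \<noteq> v"
    proof
      fix x assume "x \<in> I'"
      then have "pw x \<in> W" using I'X pw by blast
      then have "pw x \<notin> set vs" using Wp by blast
      then show "pw x \<noteq> v" using vS by blast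
    qed
  qed
  then show False using noSDK by blast
qed

theorem lemma3p1:
  fixes V :: "'a set" and E :: "'a \<Rightarrow> 'a \<Rightarrow> bool" and a :: 'a and s t :: nat
    and S :: "nat \<Rightarrow> 'a set" and vs :: "nat \<Rightarrow> 'a list" and X :: "nat \<Rightarrow> nat \<Rightarrow> 'a set"
  assumes "simple_graph V E" and "connected_graph V E"
    and "s \<ge> 1" and "t \<ge> 2"
    and "\<not> has_induced V E (path_V t) path_E"
    and "\<not> has_induced V E (SDK_V s) (SDK_E s)"
    and "\<not> has_induced V E K4_V K4_E"
    and "a \<in> V"
    and "S 1 = {a}"
    and "\<And>i. 1 \<le> i \<Longrightarrow> i \<le> t - 2 \<Longrightarrow> distinct (vs i) \<and> set (vs i) = S i"
    and "\<And>i j. 1 \<le> i \<Longrightarrow> i \<le> t - 2 \<Longrightarrow> j < length (vs i) \<Longrightarrow>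
           minimal_dom V E (Wset V E (S i)) (Bpart V E (vs i) j) (X i j)"
    and "\<And>i. 1 \<le> i \<Longrightarrow> i \<le> t - 2 \<Longrightarrow> S (i + 1) = S i \<union> (\<Union>j<length (vs i). X i j)"
  shows "\<forall>i\<in>{1..t-2}. card (S (i + 1)) \<le> card (S i) * (1 + ramsey 4 (ramsey 4 s))
           \<and> (\<forall>j<length (vs i). card (X i j) \<le> ramsey 4 (ramsey 4 s))"
proof
  fix i assume i: "i \<in> {1..t-2}"
  define R where "R = ramsey 4 (ramsey 4 s)"
  have vi: "distinct (vs i)" "set (vs i) = S i" using assms(10) i by auto
  have Xb: "\<forall>j<length (vs i). card (X i j) \<le> R"
  proof (intro allI impI)
    fix j assume j: "j < length (vs i)"
    have "minimal_dom V E (Wset V E (set (vs i))) (Bpart V E (vs i) j) (X i j)"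
      using assms(11)[of i j] i j vi(2) by auto
    then show "card (X i j) \<le> R" unfolding R_def
      using Xbound[OF assms(1) assms(3) assms(6) assms(7) j] by blast
  qed
  have Si: "S (i + 1) = S i \<union> (\<Union>j<length (vs i). X i j)" using assms(12) i by auto
  have len: "length (vs i) = card (S i)" using distinct_card[OF vi(1)] vi(2) by simp
  have "card (S (i + 1)) \<le> card (S i) + card (\<Union>j<length (vs i). X i j)"
    unfolding Si by (rule card_Un_le)
  also have "card (\<Union>j<length (vs i). X i j) \<le> (\<Sum>j<length (vs i). card (X i j))"
    by (rule card_UN_le) simp
  also have "(\<Sum>j<length (vs i). card (X i j)) \<le> (\<Sum>j<length (vs i). R)"
    by (rule sum_mono) (use Xb in auto)
  also have "(\<Sum>j<length (vs i). R) = card (S i) * R" using len by simp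
  finally have "card (S (i + 1)) \<le> card (S i) * (1 + R)" by (simp add: algebra_simps)
  then show "card (S (i + 1)) \<le> card (S i) * (1 + ramsey 4 (ramsey 4 s))
           \<and> (\<forall>j<length (vs i). card (X i j) \<le> ramsey 4 (ramsey 4 s))"
    using Xb unfolding R_def by blast
qed

end
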